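(* Let $R$ be a commutative ring with $1$, $n\ge1$, and $\phi$ an $R$-algebra endomorphism of $R^{[2n]}=R[X_1,\ldots,X_{2n}]$. Then $\phi$ is symplectic if and only if $\phi$ is an endomorphism of the Poisson algebra $P_n(R)$. If moreover one of these holds and $n!$ is invertible in $R$, then $\det(J\phi)=1$, where $J\phi=\left(\frac{\partial\phi(X_i)}{\partial X_j}\right)_{1\le i,j\le 2n}$.
   Context: The Poisson bracket on $R^{[2n]}$ is $\{f,g\}=\sum_{i=1}^n\left(\frac{\partial f}{\partial X_i}\frac{\partial g}{\partial X_{i+n}}-\frac{\partial f}{\partial X_{i+n}}\frac{\partial g}{\partial X_i}\right)$; $P_n(R)$ is $R^{[2n]}$ with this bracket, and an endomorphism of $P_n(R)$ is an $R$-algebra endomorphism $\phi$ with $\{\phi(f),\phi(g)\}=\{f,g\}$ for all $f,g$. Let $E=(R^{[2n]})^{2n}$ with canonical basis $(e_1,\ldots,e_{2n})$ and dual basis $(e_i^* )$, and $\omega=\sum_{i=1}^n e_i^*\wedge e_{i+n}^*$. For $\phi$ let $L_\phi$ be the $R^{[2n]}$-linear endomorphism of $E$ with $L_\phi(e_p)=\sum_{j}\frac{\partial\phi(X_p)}{\partial X_j}e_j$. $\phi$ is symplectic if $\omega\circ(L_\phi,L_\phi)=\omega$. *)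

theory Defs
  imports "HOL-Library.Poly_Mapping" "Jordan_Normal_Form.Determinant"
begin

text \<open>Polynomials in the variables X_0, X_1, ... (0-indexed) with coefficients in 'a:
  finitely supported maps from monomials (exponent vectors) to coefficients.
  R^[2n] is the subring of those polynomials only involving X_0, ..., X_(2n-1).\<close>

type_synonym 'a mpoly = "(nat \<Rightarrow>\<^sub>0 nat) \<Rightarrow>\<^sub>0 'a"

definition polyring :: "nat \<Rightarrow> ('a::comm_ring_1) mpoly set" where
  "polyring N = {f. \<forall>m \<in> Poly_Mapping.keys f. Poly_Mapping.keys m \<subseteq> {..<N}}"

definition Var :: "nat \<Rightarrow> ('a::comm_ring_1) mpoly" where
  "Var i = Poly_Mapping.single (Poly_Mapping.single i 1) 1"

definition Const :: "'a::comm_ring_1 \<Rightarrow> 'a mpoly" where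
  "Const c = Poly_Mapping.single 0 c"

definition pd :: "nat \<Rightarrow> ('a::comm_ring_1) mpoly \<Rightarrow> 'a mpoly" where
  "pd i f = (\<Sum>m \<in> Poly_Mapping.keys f.
      Poly_Mapping.single (m - Poly_Mapping.single i 1)
        (of_nat (Poly_Mapping.lookup m i) * Poly_Mapping.lookup f m))"

definition bracket :: "nat \<Rightarrow> ('a::comm_ring_1) mpoly \<Rightarrow> 'a mpoly \<Rightarrow> 'a mpoly" where
  "bracket n f g = (\<Sum>i<n. pd i f * pd (i+n) g - pd (i+n) f * pd i g)"

definition alg_endo :: "nat \<Rightarrow> (('a::comm_ring_1) mpoly \<Rightarrow> 'a mpoly) \<Rightarrow> bool" where
  "alg_endo n \<phi> \<longleftrightarrow>
     (\<forall>f \<in> polyring (2*n). \<phi> f \<in> polyring (2*n)) \<and>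
     (\<forall>f \<in> polyring (2*n). \<forall>g \<in> polyring (2*n). \<phi> (f + g) = \<phi> f + \<phi> g) \<and>
     (\<forall>f \<in> polyring (2*n). \<forall>g \<in> polyring (2*n). \<phi> (f * g) = \<phi> f * \<phi> g) \<and>
     \<phi> 1 = 1 \<and>
     (\<forall>c. \<forall>f \<in> polyring (2*n). \<phi> (Const c * f) = Const c * \<phi> f)"

definition poisson_endo :: "nat \<Rightarrow> (('a::comm_ring_1) mpoly \<Rightarrow> 'a mpoly) \<Rightarrow> bool" where
  "poisson_endo n \<phi> \<longleftrightarrow> alg_endo n \<phi> \<and>
     (\<forall>f \<in> polyring (2*n). \<forall>g \<in> polyring (2*n).
        bracket n (\<phi> f) (\<phi> g) = \<phi> (bracket n f g))"

text \<open>Elements of E = (R^[2n])^(2n) are represented by functions nat => mpoly whose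
  entries (at indices < 2n) lie in R^[2n]; only indices < 2n matter.\<close>
definition Evec :: "nat \<Rightarrow> (nat \<Rightarrow> ('a::comm_ring_1) mpoly) set" where
  "Evec n = {u. \<forall>i < 2*n. u i \<in> polyring (2*n)}"

text \<open>omega = sum_(i<n) e_i^* wedge e_(i+n)^*.\<close>
definition omega :: "nat \<Rightarrow> (nat \<Rightarrow> ('a::comm_ring_1) mpoly) \<Rightarrow> (nat \<Rightarrow> 'a mpoly) \<Rightarrow> 'a mpoly" where
  "omega n u v = (\<Sum>i<n. u i * v (i+n) - u (i+n) * v i)"

text \<open>L_phi(e_p) = sum_j d phi(X_p)/d X_j e_j, extended R^[2n]-linearly.\<close>
definition Lphi :: "nat \<Rightarrow> (('a::comm_ring_1) mpoly \<Rightarrow> 'a mpoly) \<Rightarrow> (nat \<Rightarrow> 'a mpoly) \<Rightarrow> (nat \<Rightarrow> 'a mpoly)" where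
  "Lphi n \<phi> u = (\<lambda>j. if j < 2*n then (\<Sum>p<2*n. u p * pd j (\<phi> (Var p))) else 0)"

definition symplectic :: "nat \<Rightarrow> (('a::comm_ring_1) mpoly \<Rightarrow> 'a mpoly) \<Rightarrow> bool" where
  "symplectic n \<phi> \<longleftrightarrow>
     (\<forall>u \<in> Evec n. \<forall>v \<in> Evec n. omega n (Lphi n \<phi> u) (Lphi n \<phi> v) = omega n u v)"

definition jac :: "nat \<Rightarrow> (('a::comm_ring_1) mpoly \<Rightarrow> 'a mpoly) \<Rightarrow> 'a mpoly mat" where
  "jac n \<phi> = mat (2*n) (2*n) (\<lambda>(i,j). pd j (\<phi> (Var i)))"

end

theory Submission
  imports Defs "HOL-Library.FuncSet"
begin

lemma pd_superset:
  assumes "finite K" "Poly_Mapping.keys f \<subseteq> K"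
  shows "pd i f = (\<Sum>m\<in>K. Poly_Mapping.single (m - Poly_Mapping.single i 1)
        (of_nat (Poly_Mapping.lookup m i) * Poly_Mapping.lookup f m))"
  unfolding pd_def
  by (rule sum.mono_neutral_left) (use assms in \<open>auto simp: in_keys_iff\<close>)

lemma pd_add: "pd i (f + g) = pd i f + pd i g"
proof -
  let ?K = "Poly_Mapping.keys f \<union> Poly_Mapping.keys g"
  have "Poly_Mapping.keys (f+g) \<subseteq> ?K" by (rule keys_add)
  then show ?thesis
    by (simp add: pd_superset[of ?K f] pd_superset[of ?K g] pd_superset[of ?K "f+g"]
        lookup_add distrib_left single_add sum.distrib)
qed

lemma pd_zero[simp]: "pd i 0 = 0"
  by (simp add: pd_def)

lemma pd_sum: "pd i (sum h S) = (\<Sum>x\<in>S. pd i (h x))"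
  by (induction S rule: infinite_finite_induct) (auto simp: pd_add)

lemma pd_diff: "pd i (f - g) = pd i f - pd i g"
  by (metis add_diff_cancel_right' diff_add_cancel pd_add)

lemma pd_single: "pd i (Poly_Mapping.single m a) =
   Poly_Mapping.single (m - Poly_Mapping.single i 1) (of_nat (Poly_Mapping.lookup m i) * a)"
  by (simp add: pd_superset[of "{m}"])

lemma mon_sub:
  fixes m m' d :: "nat \<Rightarrow>\<^sub>0 nat"
  assumes "\<forall>k. Poly_Mapping.lookup d k \<le> Poly_Mapping.lookup m k"
  shows "m - d + m' = m + m' - d" "m' + (m - d) = m + m' - d"
  using assms by (auto intro!: poly_mapping_eqI simp: lookup_add lookup_minus)

lemma pd_mult_single:
  fixes a b :: "'a::comm_ring_1"
  shows "pd i (Poly_Mapping.single m a * Poly_Mapping.single m' b) =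
    pd i (Poly_Mapping.single m a) * Poly_Mapping.single m' b +
    Poly_Mapping.single m a * pd i (Poly_Mapping.single m' b)"
proof -
  define d where "d = Poly_Mapping.single i (1::nat)"
  have hd: "Poly_Mapping.lookup d k = (if k = i then 1 else 0)" for k
    unfolding d_def by (simp add: lookup_single when_def)
  define x where "x = Poly_Mapping.lookup m i"
  define y where "y = Poly_Mapping.lookup m' i"
  have L: "pd i (Poly_Mapping.single m a * Poly_Mapping.single m' b) =
     Poly_Mapping.single (m + m' - d) (of_nat (x + y) * (a * b))"
    by (simp add: pd_single mult_single lookup_add d_def x_def y_def)
  have R: "pd i (Poly_Mapping.single m a) * Poly_Mapping.single m' b +
    Poly_Mapping.single m a * pd i (Poly_Mapping.single m' b) =
    Poly_Mapping.single (m - d + m') (of_nat x * a * b) +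
    Poly_Mapping.single (m + (m' - d)) (a * (of_nat y * b))"
    by (simp add: pd_single mult_single d_def x_def y_def)
  have ex: "x > 0 \<Longrightarrow> \<forall>k. Poly_Mapping.lookup d k \<le> Poly_Mapping.lookup m k"
    using hd x_def by auto
  have ey: "y > 0 \<Longrightarrow> \<forall>k. Poly_Mapping.lookup d k \<le> Poly_Mapping.lookup m' k"
    using hd y_def by auto
  show ?thesis unfolding L R
  proof (cases "x = 0")
    case True
    show "Poly_Mapping.single (m + m' - d) (of_nat (x + y) * (a * b)) =
      Poly_Mapping.single (m - d + m') (of_nat x * a * b) + Poly_Mapping.single (m + (m' - d)) (a * (of_nat y * b))"
    proof (cases "y = 0")
      case True
      then show ?thesis using \<open>x = 0\<close> by simp
    next
      case False
      then have "m + (m' - d) = m + m' - d" using mon_sub(2)[OF ey, of m] by (simp add: add.commute)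
      then show ?thesis using \<open>x = 0\<close> by (simp add: algebra_simps)
    qed
  next
    case False
    then have e1: "m - d + m' = m + m' - d" using mon_sub(1)[OF ex] by simp
    show "Poly_Mapping.single (m + m' - d) (of_nat (x + y) * (a * b)) =
      Poly_Mapping.single (m - d + m') (of_nat x * a * b) + Poly_Mapping.single (m + (m' - d)) (a * (of_nat y * b))"
    proof (cases "y = 0")
      case True
      then show ?thesis using e1 by (simp add: algebra_simps)
    next
      case False
      then have "m + (m' - d) = m + m' - d" using mon_sub(2)[OF ey, of m] by (simp add: add.commute)
      then show ?thesis using e1 by (simp add: single_add[symmetric] algebra_simps)
    qed
  qed
qed

lemma poly_sum_single:
  "f = (\<Sum>m\<in>Poly_Mapping.keys f. Poly_Mapping.single m (Poly_Mapping.lookup f m))"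
  by (rule poly_mapping_eqI) (auto simp: lookup_sum lookup_single when_def in_keys_iff)

lemma pd_mult: "pd i (f * g) = pd i f * g + f * (pd i (g::('a::comm_ring_1) mpoly))"
proof -
  let ?s = "\<lambda>h m. Poly_Mapping.single m (Poly_Mapping.lookup h m)"
  have "f * g = (\<Sum>m\<in>Poly_Mapping.keys f. ?s f m) * (\<Sum>m\<in>Poly_Mapping.keys g. ?s g m)"
    using poly_sum_single[of f] poly_sum_single[of g] by simp
  also have "\<dots> = (\<Sum>m\<in>Poly_Mapping.keys f. \<Sum>m'\<in>Poly_Mapping.keys g. ?s f m * ?s g m')"
    by (rule sum_product)
  finally have fg: "f * g = \<dots>" .
  have "pd i (f * g) = (\<Sum>m\<in>Poly_Mapping.keys f. \<Sum>m'\<in>Poly_Mapping.keys g.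
       pd i (?s f m) * ?s g m' + ?s f m * pd i (?s g m'))"
    unfolding fg pd_sum pd_mult_single ..
  also have "\<dots> = (\<Sum>m\<in>Poly_Mapping.keys f. pd i (?s f m)) * (\<Sum>m'\<in>Poly_Mapping.keys g. ?s g m')
     + (\<Sum>m\<in>Poly_Mapping.keys f. ?s f m) * (\<Sum>m'\<in>Poly_Mapping.keys g. pd i (?s g m'))"
    by (simp add: sum.distrib sum_product)
  also have "\<dots> = pd i f * g + f * pd i g"
    using poly_sum_single[of f] poly_sum_single[of g] by (simp add: pd_sum[symmetric])
  finally show ?thesis .
qed



lemma keys_uminus_mp: "Poly_Mapping.keys (- (f::('a::comm_ring_1) mpoly)) = Poly_Mapping.keys f"
  by (auto simp: in_keys_iff)

lemma polyring_add: "f \<in> polyring N \<Longrightarrow> g \<in> polyring N \<Longrightarrow> f + g \<in> polyring N"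
  unfolding polyring_def using keys_add[of f g] by blast

lemma polyring_uminus: "f \<in> polyring N \<Longrightarrow> - f \<in> polyring N"
  unfolding polyring_def by (simp add: keys_uminus_mp)

lemma polyring_diff: "f \<in> polyring N \<Longrightarrow> g \<in> polyring N \<Longrightarrow> f - g \<in> polyring N"
  using polyring_add[OF _ polyring_uminus] by (metis diff_conv_add_uminus)

lemma polyring_mult: "f \<in> polyring N \<Longrightarrow> g \<in> polyring N \<Longrightarrow> f * g \<in> polyring N"
  unfolding polyring_def mem_Collect_eq
proof (intro ballI)
  fix m assume f: "\<forall>m\<in>Poly_Mapping.keys f. Poly_Mapping.keys m \<subseteq> {..<N}"
    and g: "\<forall>m\<in>Poly_Mapping.keys g. Poly_Mapping.keys m \<subseteq> {..<N}"
    and m: "m \<in> Poly_Mapping.keys (f * g)"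
  then obtain a b where "m = a + b" "a \<in> Poly_Mapping.keys f" "b \<in> Poly_Mapping.keys g"
    using keys_mult[of f g] by blast
  then show "Poly_Mapping.keys m \<subseteq> {..<N}" using f g keys_add[of a b] by blast
qed

lemma polyring_single: "Poly_Mapping.keys m \<subseteq> {..<N} \<Longrightarrow> Poly_Mapping.single m c \<in> polyring N"
  unfolding polyring_def by simp

lemma polyring_zero[simp]: "0 \<in> polyring N"
  unfolding polyring_def by simp

lemma polyring_one[simp]: "1 \<in> polyring N"
  unfolding polyring_def by simp

lemma polyring_Const[simp]: "Const c \<in> polyring N"
  unfolding polyring_def Const_def by simp

lemma polyring_Var: "i < N \<Longrightarrow> Var i \<in> polyring N"
  unfolding polyring_def Var_def by simp

lemma polyring_sum: "(\<And>x. x \<in> S \<Longrightarrow> h x \<in> polyring N) \<Longrightarrow> sum h S \<in> polyring N"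
  by (induction S rule: infinite_finite_induct) (auto intro: polyring_add)

lemma polyring_pd: assumes "f \<in> polyring N" shows "pd i f \<in> polyring N"
  unfolding pd_def
proof (rule polyring_sum)
  fix m assume "m \<in> Poly_Mapping.keys f"
  then have "Poly_Mapping.keys m \<subseteq> {..<N}" using assms unfolding polyring_def by blast
  moreover have "Poly_Mapping.keys (m - Poly_Mapping.single i 1) \<subseteq> Poly_Mapping.keys m"
    by (auto simp: in_keys_iff lookup_minus)
  ultimately show "Poly_Mapping.single (m - Poly_Mapping.single i 1)
          (of_nat (Poly_Mapping.lookup m i) * Poly_Mapping.lookup f m) \<in> polyring N"
    by (intro polyring_single) blast
qed

lemma pd_Var: "pd i (Var p) = (if i = p then 1 else 0)"
  unfolding Var_def pd_single by (auto simp: lookup_single)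

lemma pd_Const: "pd i (Const c) = 0"
  unfolding Const_def pd_single by simp

lemma Var_power: "Var a ^ b = Poly_Mapping.single (Poly_Mapping.single a b) 1"
  by (induction b) (simp_all add: Var_def mult_single single_add[symmetric])

lemma update_as_add: "a \<notin> Poly_Mapping.keys f \<Longrightarrow>
  Poly_Mapping.update a b f = f + Poly_Mapping.single a b"
  by (rule poly_mapping_eqI) (auto simp: lookup_update lookup_add lookup_single in_keys_iff when_def)

lemma Const_mult: "Const a * Const b = Const (a * b)"
  by (simp add: Const_def mult_single)

lemma Const_sum: "Const (sum h S) = (\<Sum>x\<in>S. Const (h x))"
  by (induction S rule: infinite_finite_induct) (auto simp: Const_def single_add)

lemma Const_diff: "Const (a - b) = Const a - Const b"
  by (simp add: Const_def single_diff)

lemma Const_one: "Const 1 = 1" by (simp add: Const_def)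
lemma Const_zero: "Const 0 = 0" by (simp add: Const_def)

context
  fixes n :: nat and \<phi> :: "('a::comm_ring_1) mpoly \<Rightarrow> 'a mpoly"
  assumes alg: "alg_endo n \<phi>"
begin

abbreviation "PR \<equiv> polyring (2*n) :: 'a mpoly set"

lemma phi_closed: "f \<in> PR \<Longrightarrow> \<phi> f \<in> PR"
  using alg unfolding alg_endo_def by blast
lemma phi_add: "f \<in> PR \<Longrightarrow> g \<in> PR \<Longrightarrow> \<phi> (f + g) = \<phi> f + \<phi> g"
  using alg unfolding alg_endo_def by blast
lemma phi_mult: "f \<in> PR \<Longrightarrow> g \<in> PR \<Longrightarrow> \<phi> (f * g) = \<phi> f * \<phi> g"
  using alg unfolding alg_endo_def by blast
lemma phi_one: "\<phi> 1 = 1"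
  using alg unfolding alg_endo_def by blast
lemma phi_Const: "\<phi> (Const c) = Const c"
proof -
  have "\<forall>c. \<forall>f\<in>PR. \<phi> (Const c * f) = Const c * \<phi> f" using alg unfolding alg_endo_def by blast
  then have "\<phi> (Const c * 1) = Const c * \<phi> 1" using polyring_one by blast
  then show ?thesis by (simp add: phi_one)
qed
lemma phi_zero: "\<phi> 0 = 0"
  using phi_Const[of 0] by (simp add: Const_def)
lemma phi_diff: "f \<in> PR \<Longrightarrow> g \<in> PR \<Longrightarrow> \<phi> (f - g) = \<phi> f - \<phi> g"
  using phi_add[of "f - g" g] polyring_diff by fastforce
lemma phi_sum: "(\<And>x. x \<in> S \<Longrightarrow> h x \<in> PR) \<Longrightarrow> \<phi> (sum h S) = (\<Sum>x\<in>S. \<phi> (h x))"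
proof (induction S rule: infinite_finite_induct)
  case (infinite A) then show ?case by (simp add: phi_zero)
next
  case empty then show ?case by (simp add: phi_zero)
next
  case (insert x F)
  then show ?case by (simp add: phi_add polyring_sum)
qed

definition Q :: "'a mpoly \<Rightarrow> bool" where
  "Q f \<longleftrightarrow> f \<in> PR \<and> (\<forall>j. pd j (\<phi> f) = (\<Sum>p<2*n. \<phi> (pd p f) * pd j (\<phi> (Var p))))"

lemma Q_add: "Q f \<Longrightarrow> Q g \<Longrightarrow> Q (f + g)"
  unfolding Q_def
  by (auto simp: polyring_add phi_add pd_add polyring_pd sum.distrib distrib_right)

lemma Q_mult: assumes "Q f" "Q g" shows "Q (f * g)"
proof -
  have f: "f \<in> PR" and g: "g \<in> PR" using assms unfolding Q_def by auto
  have "pd j (\<phi> (f * g)) = (\<Sum>p<2*n. \<phi> (pd p (f * g)) * pd j (\<phi> (Var p)))" for j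
  proof -
    have "pd j (\<phi> (f * g)) = pd j (\<phi> f) * \<phi> g + \<phi> f * pd j (\<phi> g)"
      by (simp add: phi_mult f g pd_mult)
    also have "\<dots> = (\<Sum>p<2*n. \<phi> (pd p f) * pd j (\<phi> (Var p))) * \<phi> g
         + \<phi> f * (\<Sum>p<2*n. \<phi> (pd p g) * pd j (\<phi> (Var p)))"
      using assms unfolding Q_def by simp
    also have "\<dots> = (\<Sum>p<2*n. (\<phi> (pd p f) * \<phi> g + \<phi> f * \<phi> (pd p g)) * pd j (\<phi> (Var p)))"
      by (simp add: sum_distrib_left sum_distrib_right sum.distrib algebra_simps)
    also have "\<dots> = (\<Sum>p<2*n. \<phi> (pd p (f * g)) * pd j (\<phi> (Var p)))"
      by (intro sum.cong refl)
         (simp add: pd_mult phi_add phi_mult polyring_pd polyring_mult f g)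
    finally show ?thesis .
  qed
  then show ?thesis unfolding Q_def using polyring_mult[OF f g] by blast
qed

lemma Q_Const: "Q (Const c)"
  unfolding Q_def by (simp add: phi_Const pd_Const phi_zero)

lemma Q_Var: assumes "q < 2*n" shows "Q (Var q)"
proof -
  have e: "\<phi> (pd p (Var q)) * x = (if p = q then x else 0)" for p x
    by (simp add: pd_Var phi_one phi_zero)
  have "(\<Sum>p<2*n. \<phi> (pd p (Var q)) * pd j (\<phi> (Var p))) = pd j (\<phi> (Var q))" for j
    using assms by (simp add: e)
  then show ?thesis unfolding Q_def using polyring_Var[OF assms] by simp
qed

lemma Q_pow: "q < 2*n \<Longrightarrow> Q (Var q ^ k)"
proof (induction k)
  case 0 then show ?case using Q_Const[of 1] by (simp add: Const_one)
next
  case (Suc k) then show ?case by (simp add: Q_mult Q_Var)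
qed

lemma Q_single: "Poly_Mapping.keys m \<subseteq> {..<2*n} \<Longrightarrow> Q (Poly_Mapping.single m c)"
proof (induction m rule: update_induct)
  case const
  then show ?case using Q_Const[of c] by (simp add: Const_def)
next
  case (update f a b)
  then have a: "a < 2*n" and kf: "Poly_Mapping.keys f \<subseteq> {..<2*n}"
    by (auto simp: keys_update)
  have "Poly_Mapping.single (Poly_Mapping.update a b f) c = Poly_Mapping.single f c * Var a ^ b"
    using update.hyps by (simp add: update_as_add Var_power mult_single)
  then show ?case using update.IH[OF kf] Q_pow[OF a] Q_mult by simp
qed

lemma Q_zero: "Q 0"
  using Q_Const[of 0] by (simp add: Const_zero)

lemma Q_sum: "(\<And>x. x \<in> S \<Longrightarrow> Q (h x)) \<Longrightarrow> Q (sum h S)"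
  by (induction S rule: infinite_finite_induct) (auto simp: Q_zero Q_add)

lemma Q_all: assumes "f \<in> PR" shows "Q f"
proof -
  have "Q (\<Sum>m\<in>Poly_Mapping.keys f. Poly_Mapping.single m (Poly_Mapping.lookup f m))"
    using assms unfolding polyring_def by (intro Q_sum Q_single) blast
  then show ?thesis using poly_sum_single[of f] by simp
qed

lemma chain_rule: "f \<in> PR \<Longrightarrow> pd j (\<phi> f) = (\<Sum>p<2*n. \<phi> (pd p f) * pd j (\<phi> (Var p)))"
  using Q_all unfolding Q_def by blast

end


lemma bilin_expand:
  fixes u v :: "nat \<Rightarrow> 'b::comm_ring_1" and D :: "nat \<Rightarrow> nat \<Rightarrow> 'b"
  shows "(\<Sum>i<n. (\<Sum>p\<in>S. u p * D p i) * (\<Sum>q\<in>S. v q * D q (i+n))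
               - (\<Sum>p\<in>S. u p * D p (i+n)) * (\<Sum>q\<in>S. v q * D q i))
    = (\<Sum>p\<in>S. \<Sum>q\<in>S. u p * v q * (\<Sum>i<n. D p i * D q (i+n) - D p (i+n) * D q i))"
proof -
  have t: "u p * v q * (D p i * D q (i+n) - D p (i+n) * D q i) =
     u p * D p i * (v q * D q (i+n)) - u p * D p (i+n) * (v q * D q i)" for p q i
    by (simp add: algebra_simps)
  have "(\<Sum>p\<in>S. \<Sum>q\<in>S. u p * v q * (\<Sum>i<n. D p i * D q (i+n) - D p (i+n) * D q i))
     = (\<Sum>p\<in>S. \<Sum>q\<in>S. \<Sum>i<n. u p * v q * (D p i * D q (i+n) - D p (i+n) * D q i))"
    by (simp only: sum_distrib_left)
  also have "\<dots> = (\<Sum>p\<in>S. \<Sum>i<n. \<Sum>q\<in>S. u p * v q * (D p i * D q (i+n) - D p (i+n) * D q i))"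
    by (rule sum.cong[OF refl], rule sum.swap)
  also have "\<dots> = (\<Sum>i<n. \<Sum>p\<in>S. \<Sum>q\<in>S. u p * v q * (D p i * D q (i+n) - D p (i+n) * D q i))"
    by (rule sum.swap)
  also have "\<dots> = (\<Sum>i<n. (\<Sum>p\<in>S. u p * D p i) * (\<Sum>q\<in>S. v q * D q (i+n))
               - (\<Sum>p\<in>S. u p * D p (i+n)) * (\<Sum>q\<in>S. v q * D q i))"
    by (simp only: t sum_product sum_subtractf)
  finally show ?thesis by (rule sym)
qed

lemma omega_cong:
  assumes "\<And>j. j < 2*n \<Longrightarrow> u j = u' j" "\<And>j. j < 2*n \<Longrightarrow> v j = v' j"
  shows "omega n u v = omega n u' v'"
  unfolding omega_def by (intro sum.cong refl) (simp add: assms)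

lemma omega_expand:
  "omega n (Lphi n \<phi> u) (Lphi n \<phi> v) =
   (\<Sum>p<2*n. \<Sum>q<2*n. u p * v q * bracket n (\<phi> (Var p)) (\<phi> (Var q)))"
proof -
  have "omega n (Lphi n \<phi> u) (Lphi n \<phi> v) =
    (\<Sum>i<n. (\<Sum>p<2*n. u p * pd i (\<phi> (Var p))) * (\<Sum>q<2*n. v q * pd (i+n) (\<phi> (Var q)))
        - (\<Sum>p<2*n. u p * pd (i+n) (\<phi> (Var p))) * (\<Sum>q<2*n. v q * pd i (\<phi> (Var q))))"
    unfolding omega_def Lphi_def by (intro sum.cong refl) auto
  also have "\<dots> = (\<Sum>p<2*n. \<Sum>q<2*n. u p * v q * bracket n (\<phi> (Var p)) (\<phi> (Var q)))"
    unfolding bracket_def by (rule bilin_expand[where D = "\<lambda>p j. pd j (\<phi> (Var p))"])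
  finally show ?thesis .
qed

lemma Lphi_id: "j < 2*n \<Longrightarrow> Lphi n (\<lambda>x. x) u j = u j"
proof -
  assume j: "j < 2*n"
  have e: "u p * pd j (Var p) = (if p = j then u j else 0)" for p
    by (simp add: pd_Var)
  show ?thesis unfolding Lphi_def using j by (simp add: e)
qed

lemma omega_id_expand:
  "omega n u v = (\<Sum>p<2*n. \<Sum>q<2*n. u p * v q * bracket n (Var p) (Var q))"
proof -
  have "omega n u v = omega n (Lphi n (\<lambda>x. x) u) (Lphi n (\<lambda>x. x) v)"
    by (rule omega_cong) (simp_all add: Lphi_id)
  then show ?thesis using omega_expand[of n "\<lambda>x. x" u v] by simp
qed

lemma bracket_as_omega: "bracket n F G = omega n (\<lambda>j. pd j F) (\<lambda>j. pd j G)"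
  unfolding bracket_def omega_def by simp

lemma pd_Var_Const: "pd i (Var p) = Const (if i = p then 1 else 0)"
  by (simp add: pd_Var Const_one Const_zero)

lemma bracket_Var_Const: "\<exists>c. bracket n (Var p) (Var q) = Const c"
proof
  show "bracket n (Var p) (Var q) = Const (\<Sum>i<n. (if i = p then 1 else 0) * (if i + n = q then 1 else 0)
     - (if i + n = p then 1 else 0) * (if i = q then 1 else 0))"
    unfolding bracket_def pd_Var_Const Const_sum Const_diff Const_mult ..
qed

lemma double_delta:
  fixes X :: "nat \<Rightarrow> nat \<Rightarrow> 'b::comm_ring_1"
  assumes "p < N" "q < N"
  shows "(\<Sum>p'<N. \<Sum>q'<N. (if p' = p then 1 else 0) * (if q' = q then 1 else 0) * X p' q') = X p q"
proof -
  have e: "(\<Sum>q'<N. (if p' = p then 1 else 0) * (if q' = q then 1 else 0) * X p' q') =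
     (if p' = p then X p q else 0)" for p'
  proof (cases "p' = p")
    case True
    have e0: "(if b then 1 else 0) * y = (if b then y else 0)" for b and y :: 'b by simp
    show ?thesis using True assms by (simp add: e0)
  qed simp
  show ?thesis unfolding e using assms by simp
qed



context
  fixes n :: nat and \<phi> :: "('a::comm_ring_1) mpoly \<Rightarrow> 'a mpoly"
  assumes alg: "alg_endo n \<phi>"
begin

definition BR :: bool where
  "BR \<longleftrightarrow> (\<forall>p<2*n. \<forall>q<2*n. bracket n (\<phi> (Var p)) (\<phi> (Var q)) = bracket n (Var p) (Var q))"

lemma sym_iff_BR: "symplectic n \<phi> \<longleftrightarrow> BR"
proof
  assume s: "symplectic n \<phi>"
  show BR unfolding BR_def
  proof (intro allI impI)
    fix p q assume p: "p < 2*n" and q: "q < 2*n"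
    define u where "u = (\<lambda>k. if k = p then 1 else (0::'a mpoly))"
    define v where "v = (\<lambda>k. if k = q then 1 else (0::'a mpoly))"
    have uv: "u \<in> Evec n" "v \<in> Evec n" unfolding u_def v_def Evec_def by auto
    have "omega n (Lphi n \<phi> u) (Lphi n \<phi> v) = omega n u v"
      using s uv unfolding symplectic_def by blast
    then have e1: "(\<Sum>p<2*n. \<Sum>q<2*n. u p * v q * bracket n (\<phi> (Var p)) (\<phi> (Var q)))
       = (\<Sum>p<2*n. \<Sum>q<2*n. u p * v q * bracket n (Var p) (Var q))"
      unfolding omega_expand[of n \<phi> u v] omega_id_expand[of n u v] .
    have e2: "(\<Sum>p<2*n. \<Sum>q<2*n. u p * v q * bracket n (\<phi> (Var p)) (\<phi> (Var q)))
       = bracket n (\<phi> (Var p)) (\<phi> (Var q))"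
      unfolding u_def v_def by (rule double_delta[OF p q])
    have e3: "(\<Sum>p<2*n. \<Sum>q<2*n. u p * v q * bracket n (Var p) (Var q))
       = bracket n (Var p) (Var q)"
      unfolding u_def v_def by (rule double_delta[OF p q])
    show "bracket n (\<phi> (Var p)) (\<phi> (Var q)) = bracket n (Var p) (Var q)"
      using e1 e2 e3 by metis
  qed
next
  assume b: BR
  have "omega n (Lphi n \<phi> u) (Lphi n \<phi> v) = omega n u v" for u v
  proof -
    have "omega n (Lphi n \<phi> u) (Lphi n \<phi> v) =
       (\<Sum>p<2*n. \<Sum>q<2*n. u p * v q * bracket n (\<phi> (Var p)) (\<phi> (Var q)))"
      by (rule omega_expand)
    also have "\<dots> = (\<Sum>p<2*n. \<Sum>q<2*n. u p * v q * bracket n (Var p) (Var q))"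
      using b unfolding BR_def by (intro sum.cong refl) simp
    also have "\<dots> = omega n u v" by (rule omega_id_expand[symmetric])
    finally show ?thesis .
  qed
  then show "symplectic n \<phi>" unfolding symplectic_def by blast
qed

lemma poisson_imp_BR: "poisson_endo n \<phi> \<Longrightarrow> BR"
  unfolding BR_def
proof (intro allI impI)
  fix p q assume pe: "poisson_endo n \<phi>" and p: "p < 2*n" and q: "q < 2*n"
  obtain c :: 'a where c: "bracket n (Var p) (Var q) = Const c" using bracket_Var_Const by blast
  have "bracket n (\<phi> (Var p)) (\<phi> (Var q)) = \<phi> (bracket n (Var p) (Var q))"
    using pe p q polyring_Var unfolding poisson_endo_def by blast
  also have "\<dots> = bracket n (Var p) (Var q)" unfolding c by (rule phi_Const[OF alg])
  finally show "bracket n (\<phi> (Var p)) (\<phi> (Var q)) = bracket n (Var p) (Var q)" .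
qed

lemma BR_imp_poisson: assumes b: BR shows "poisson_endo n \<phi>"
  unfolding poisson_endo_def
proof (intro conjI alg ballI)
  fix f g :: "'a mpoly" assume f: "f \<in> polyring (2*n)" and g: "g \<in> polyring (2*n)"
  define a where "a = (\<lambda>p. \<phi> (pd p f))"
  define b' where "b' = (\<lambda>p. \<phi> (pd p g))"
  have La: "pd j (\<phi> f) = Lphi n \<phi> a j" if "j < 2*n" for j
  proof -
    have L: "Lphi n \<phi> a j = (\<Sum>p<2*n. \<phi> (pd p f) * pd j (\<phi> (Var p)))"
      unfolding Lphi_def a_def using that by (simp only: if_True)
    from chain_rule[OF alg f, of j] this show ?thesis by (rule trans_sym)
  qed
  have Lb: "pd j (\<phi> g) = Lphi n \<phi> b' j" if "j < 2*n" for j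
  proof -
    have L: "Lphi n \<phi> b' j = (\<Sum>p<2*n. \<phi> (pd p g) * pd j (\<phi> (Var p)))"
      unfolding Lphi_def b'_def using that by (simp only: if_True)
    from chain_rule[OF alg g, of j] this show ?thesis by (rule trans_sym)
  qed
  have "bracket n (\<phi> f) (\<phi> g) = omega n (Lphi n \<phi> a) (Lphi n \<phi> b')"
    unfolding bracket_as_omega by (rule omega_cong) (simp_all only: La Lb)
  also have "\<dots> = (\<Sum>p<2*n. \<Sum>q<2*n. a p * b' q * bracket n (\<phi> (Var p)) (\<phi> (Var q)))"
    by (rule omega_expand)
  also have "\<dots> = (\<Sum>p<2*n. \<Sum>q<2*n. a p * b' q * bracket n (Var p) (Var q))"
    using b unfolding BR_def by (intro sum.cong refl) simp
  also have "\<dots> = omega n a b'" by (rule omega_id_expand[symmetric])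
  also have "\<dots> = \<phi> (bracket n f g)"
  proof -
    have e: "\<phi> (pd i f) * \<phi> (pd (i+n) g) - \<phi> (pd (i+n) f) * \<phi> (pd i g)
       = \<phi> (pd i f * pd (i+n) g - pd (i+n) f * pd i g)" for i
      by (simp add: phi_diff[OF alg] phi_mult[OF alg] polyring_diff polyring_mult polyring_pd f g)
    have m: "pd i f * pd (i+n) g - pd (i+n) f * pd i g \<in> polyring (2*n)" for i
      by (simp add: polyring_diff polyring_mult polyring_pd f g)
    show ?thesis
      unfolding omega_def bracket_def a_def b'_def e
      by (rule phi_sum[OF alg, symmetric]) (rule m)
  qed
  finally show "bracket n (\<phi> f) (\<phi> g) = \<phi> (bracket n f g)" .
qed

lemma sym_BR_expl: "symplectic n \<phi> \<Longrightarrow>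
   \<forall>p<2*n. \<forall>q<2*n. bracket n (\<phi> (Var p)) (\<phi> (Var q)) = bracket n (Var p) (Var q)"
  using sym_iff_BR unfolding BR_def by blast

lemma part1: "symplectic n \<phi> \<longleftrightarrow> poisson_endo n \<phi>"
  using sym_iff_BR poisson_imp_BR BR_imp_poisson by blast

end


definition Gk :: "nat \<Rightarrow> (nat \<Rightarrow> nat \<Rightarrow> 'b::comm_ring_1) \<Rightarrow> nat \<Rightarrow> 'b" where
  "Gk n X k = (\<Sum>\<sigma>\<in>{\<sigma>. \<sigma> permutes {0..<2*n}}. signof \<sigma> *
      (\<Prod>i<k. X (\<sigma> i) (\<sigma> (i+n))) *
      (\<Prod>i\<in>{k..<n}. X (\<sigma> i) (\<sigma> (i+n)) - X (\<sigma> (i+n)) (\<sigma> i)))"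

lemma Gk_step:
  assumes k: "k < n"
  shows "Gk n X k = 2 * Gk n X (Suc k)"
proof -
  let ?U = "{0..<2*n}"
  let ?Perms = "{\<sigma>. \<sigma> permutes ?U}"
  define P where "P \<sigma> = (\<Prod>i<k. X (\<sigma> i) (\<sigma> (i+n)))" for \<sigma> :: "nat \<Rightarrow> nat"
  define R where "R \<sigma> = (\<Prod>i\<in>{Suc k..<n}. X (\<sigma> i) (\<sigma> (i+n)) - X (\<sigma> (i+n)) (\<sigma> i))" for \<sigma> :: "nat \<Rightarrow> nat"
  define Xk where "Xk \<sigma> = X (\<sigma> k) (\<sigma> (k+n))" for \<sigma> :: "nat \<Rightarrow> nat"
  define Yk where "Yk \<sigma> = X (\<sigma> (k+n)) (\<sigma> k)" for \<sigma> :: "nat \<Rightarrow> nat"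
  define \<tau> where "\<tau> = Transposition.transpose k (k+n)"
  have \<tau>: "\<tau> permutes ?U" unfolding \<tau>_def using k by (intro permutes_swap_id) auto
  have kk: "k \<noteq> k + n" using k by simp
  have sgn\<tau>: "sign \<tau> = -1" unfolding \<tau>_def using kk by (simp add: sign_swap_id)
  have G1: "Gk n X k = (\<Sum>\<sigma>\<in>?Perms. signof \<sigma> * P \<sigma> * Xk \<sigma> * R \<sigma>) - (\<Sum>\<sigma>\<in>?Perms. signof \<sigma> * P \<sigma> * Yk \<sigma> * R \<sigma>)"
  proof -
    have "Gk n X k = (\<Sum>\<sigma>\<in>?Perms. signof \<sigma> * P \<sigma> * ((Xk \<sigma> - Yk \<sigma>) * R \<sigma>))"
      unfolding Gk_def P_def R_def Xk_def Yk_def using k by (simp add: prod.atLeast_Suc_lessThan)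
    also have "\<dots> = (\<Sum>\<sigma>\<in>?Perms. signof \<sigma> * P \<sigma> * Xk \<sigma> * R \<sigma> - signof \<sigma> * P \<sigma> * Yk \<sigma> * R \<sigma>)"
      by (intro sum.cong refl) (simp add: algebra_simps)
    finally show ?thesis by (simp add: sum_subtractf)
  qed
  have G2: "Gk n X (Suc k) = (\<Sum>\<sigma>\<in>?Perms. signof \<sigma> * P \<sigma> * Xk \<sigma> * R \<sigma>)"
    unfolding Gk_def P_def R_def Xk_def by (intro sum.cong refl) (simp add: mult.assoc)
  have swap: "(\<Sum>\<sigma>\<in>?Perms. signof \<sigma> * P \<sigma> * Yk \<sigma> * R \<sigma>) = - (\<Sum>\<sigma>\<in>?Perms. signof \<sigma> * P \<sigma> * Xk \<sigma> * R \<sigma>)"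
  proof -
    have "(\<Sum>\<sigma>\<in>?Perms. signof \<sigma> * P \<sigma> * Yk \<sigma> * R \<sigma>) =
       (\<Sum>\<sigma>\<in>?Perms. signof (\<sigma> \<circ> \<tau>) * P (\<sigma> \<circ> \<tau>) * Yk (\<sigma> \<circ> \<tau>) * R (\<sigma> \<circ> \<tau>))"
      by (rule sum_permutations_compose_right[OF \<tau>])
    also have "\<dots> = (\<Sum>\<sigma>\<in>?Perms. - (signof \<sigma> * P \<sigma> * Xk \<sigma> * R \<sigma>))"
    proof (intro sum.cong refl)
      fix \<sigma> assume "\<sigma> \<in> ?Perms"
      then have \<sigma>: "\<sigma> permutes ?U" by simp
      have "sign (\<sigma> \<circ> \<tau>) = sign \<sigma> * sign \<tau>"
        by (rule sign_compose) (use \<sigma> \<tau> permutation_permutes in blast)+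
      then have s: "signof (\<sigma> \<circ> \<tau>) = - signof \<sigma>" by (simp add: sgn\<tau>)
      have tfix: "\<tau> j = j" if "j \<noteq> k" "j \<noteq> k + n" for j
        unfolding \<tau>_def using that by (simp add: transpose_apply_other)
      have p: "P (\<sigma> \<circ> \<tau>) = P \<sigma>" unfolding P_def
        by (intro prod.cong refl) (use k in \<open>simp add: tfix\<close>)
      have r: "R (\<sigma> \<circ> \<tau>) = R \<sigma>" unfolding R_def
        by (intro prod.cong refl) (simp add: tfix)
      have y: "Yk (\<sigma> \<circ> \<tau>) = Xk \<sigma>" unfolding Yk_def Xk_def \<tau>_def by simp
      show "signof (\<sigma> \<circ> \<tau>) * P (\<sigma> \<circ> \<tau>) * Yk (\<sigma> \<circ> \<tau>) * R (\<sigma> \<circ> \<tau>) = - (signof \<sigma> * P \<sigma> * Xk \<sigma> * R \<sigma>)"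
        unfolding s p r y by simp
    qed
    also have "\<dots> = - (\<Sum>\<sigma>\<in>?Perms. signof \<sigma> * P \<sigma> * Xk \<sigma> * R \<sigma>)"
      by (simp add: sum_negf)
    finally show ?thesis .
  qed
  show ?thesis unfolding G1 G2 swap by simp
qed

lemma Gk_down: "d \<le> n \<Longrightarrow> Gk n X (n - d) = 2 ^ d * Gk n X n"
proof (induction d)
  case 0 then show ?case by simp
next
  case (Suc d)
  then have "n - Suc d < n" "Suc (n - Suc d) = n - d" by auto
  then show ?case using Gk_step[of "n - Suc d" n X] Suc by simp
qed

lemma pairs_expand:
  fixes X :: "nat \<Rightarrow> nat \<Rightarrow> 'b::comm_ring_1"
  shows "(\<Sum>\<sigma>\<in>{\<sigma>. \<sigma> permutes {0..<2*n}}. signof \<sigma> *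
      (\<Prod>i<n. X (\<sigma> i) (\<sigma> (i+n)) - X (\<sigma> (i+n)) (\<sigma> i)))
    = 2 ^ n * (\<Sum>\<sigma>\<in>{\<sigma>. \<sigma> permutes {0..<2*n}}. signof \<sigma> * (\<Prod>i<n. X (\<sigma> i) (\<sigma> (i+n))))"
proof -
  have "Gk n X (n - n) = 2 ^ n * Gk n X n" by (rule Gk_down) simp
  moreover have "Gk n X 0 = (\<Sum>\<sigma>\<in>{\<sigma>. \<sigma> permutes {0..<2*n}}. signof \<sigma> *
      (\<Prod>i<n. X (\<sigma> i) (\<sigma> (i+n)) - X (\<sigma> (i+n)) (\<sigma> i)))"
    unfolding Gk_def by (simp add: atLeast0LessThan)
  moreover have "Gk n X n = (\<Sum>\<sigma>\<in>{\<sigma>. \<sigma> permutes {0..<2*n}}. signof \<sigma> * (\<Prod>i<n. X (\<sigma> i) (\<sigma> (i+n))))"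
    unfolding Gk_def by simp
  ultimately show ?thesis by simp
qed



lemma prod_split2n:
  fixes h :: "nat \<Rightarrow> 'b::comm_monoid_mult" and n :: nat
  shows "(\<Prod>k\<in>{0..<2*n}. h k) = (\<Prod>i<n. h i) * (\<Prod>i<n. h (i+n)) "
proof -
  have "(\<Prod>k\<in>{0..<2*n}. h k) = (\<Prod>k\<in>{0..<n}. h k) * (\<Prod>k\<in>{n..<n+n}. h k)"
    by (simp add: prod.atLeastLessThan_concat mult_2)
  also have "(\<Prod>k\<in>{n..<n+n}. h k) = (\<Prod>k\<in>{0..<n}. h (k+n))"
    using prod.shift_bounds_nat_ivl[of h 0 n n] by simp
  finally show ?thesis by (simp add: atLeast0LessThan)
qed

lemma D_det:
  assumes A: "A \<in> carrier_mat m m"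
  shows "(\<Sum>\<sigma>\<in>{\<sigma>. \<sigma> permutes {0..<m}}. signof \<sigma> * (\<Prod>k\<in>{0..<m}. A $$ (\<sigma> k, g k)))
     = det (mat m m (\<lambda>(i,j). A $$ (i, g j)))"
proof -
  let ?M = "mat m m (\<lambda>(i,j). A $$ (i, g j))"
  have M: "?M \<in> carrier_mat m m" by simp
  have "det ?M = det (transpose_mat ?M)" using det_transpose[OF M] by simp
  also have "\<dots> = (\<Sum>\<sigma>\<in>{\<sigma>. \<sigma> permutes {0..<m}}. signof \<sigma> * (\<Prod>k\<in>{0..<m}. transpose_mat ?M $$ (k, \<sigma> k)))"
    by (rule det_def') simp
  also have "\<dots> = (\<Sum>\<sigma>\<in>{\<sigma>. \<sigma> permutes {0..<m}}. signof \<sigma> * (\<Prod>k\<in>{0..<m}. A $$ (\<sigma> k, g k)))"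
  proof (intro sum.cong refl arg_cong2[where f="(*)"] prod.cong)
    fix \<sigma> k assume "\<sigma> \<in> {\<sigma>. \<sigma> permutes {0..<m}}" "k \<in> {0..<m}"
    then have "\<sigma> k < m" "k < m" using permutes_in_image by fastforce+
    then show "transpose_mat ?M $$ (k, \<sigma> k) = A $$ (\<sigma> k, g k)" by simp
  qed
  finally show ?thesis by simp
qed

lemma det_cols_noninj:
  assumes "i \<noteq> j" "i < m" "j < m" "g i = g j"
  shows "det (mat m m (\<lambda>(i,j). A $$ (i, g j))) = 0"
  by (rule det_identical_columns[of _ m i j]) (use assms in \<open>auto intro!: eq_vecI\<close>)

lemma det_cols_perm:
  assumes A: "A \<in> carrier_mat m m" and g: "g permutes {0..<m}"
  shows "det (mat m m (\<lambda>(i,j). A $$ (i, g j))) = signof g * det A"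
proof -
  have AT: "transpose_mat A \<in> carrier_mat m m" using A by simp
  have e: "mat m m (\<lambda>(i,j). A $$ (i, g j)) = transpose_mat (mat m m (\<lambda>(i,j). transpose_mat A $$ (g i, j)))"
    using A permutes_in_image[OF g] by (intro eq_matI) auto
  show ?thesis unfolding e
    by (subst det_transpose[of _ m]) (simp_all add: det_permute_rows[OF AT g] det_transpose[OF A])
qed

definition bswap :: "nat \<Rightarrow> nat \<Rightarrow> nat" where
  "bswap n k = (if k < n then k + n else if k < 2*n then k - n else k)"

lemma bswap_bswap: "bswap n (bswap n k) = k"
  unfolding bswap_def by auto

lemma bswap_permutes: "bswap n permutes {0..<2*n}"
  unfolding permutes_def
proof (intro conjI allI impI)
  fix x assume "x \<notin> {0..<2*n}" then show "bswap n x = x" unfolding bswap_def by auto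
next
  fix y show "\<exists>!x. bswap n x = y"
    by (rule ex1I[of _ "bswap n y"]) (simp_all add: bswap_bswap, metis bswap_bswap)
qed

definition dbl :: "nat \<Rightarrow> (nat \<Rightarrow> nat) \<Rightarrow> nat \<Rightarrow> nat" where
  "dbl n p k = (if k < n then p k else if k < 2*n then p (k - n) + n else k)"

lemma dbl_props:
  assumes p: "p permutes {0..<n}"
  shows "dbl n p permutes {0..<2*n}" "sign (dbl n p) = 1"
proof -
  have pU: "p permutes {0..<2*n}" using permutes_subset[OF p] by auto
  have c: "bswap n permutes {0..<2*n}" by (rule bswap_permutes)
  define s where "s = bswap n \<circ> p \<circ> bswap n"
  have s: "s permutes {0..<2*n}" unfolding s_def by (intro permutes_compose c pU)
  have pout: "p k = k" if "k \<ge> n" for k using p that unfolding permutes_def by auto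
  have pin: "p k < n" if "k < n" for k using permutes_in_image[OF p] that by auto
  have e: "dbl n p = p \<circ> s"
  proof
    fix k
    show "dbl n p k = (p \<circ> s) k"
    proof (cases "k < n")
      case True
      then show ?thesis unfolding dbl_def s_def bswap_def by (simp add: pout)
    next
      case False
      show ?thesis
      proof (cases "k < 2*n")
        case True
        have "p (k - n) < n" using True False by (intro pin) simp
        then show ?thesis unfolding dbl_def s_def bswap_def using True False by (simp add: pout)
      next
        case False2: False
        then show ?thesis unfolding dbl_def s_def bswap_def using False by (simp add: pout)
      qed
    qed
  qed
  show "dbl n p permutes {0..<2*n}" unfolding e by (intro permutes_compose s pU)
  have perm: "permutation q" if "q permutes {0..<2*n}" for q
    using that permutation_permutes by blast
  have "sign s = sign (bswap n) * sign p * sign (bswap n)"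
    unfolding s_def by (simp add: sign_compose perm c pU permutes_compose)
  also have "\<dots> = sign p" by (metis mult.commute mult.left_commute mult.right_neutral sign_idempotent)
  finally have "sign s = sign p" .
  then show "sign (dbl n p) = 1" unfolding e by (simp add: sign_compose perm s pU)
qed



lemma step2:
  assumes A: "A \<in> carrier_mat (2*n) (2*n)"
  shows "(\<Sum>\<sigma>\<in>{\<sigma>. \<sigma> permutes {0..<2*n}}. signof \<sigma> *
      (\<Prod>i<n. \<Sum>c<n. A $$ (\<sigma> i, c) * A $$ (\<sigma> (i+n), c+n))) = of_nat (fact n) * det A"
proof -
  let ?Pm = "{\<sigma>. \<sigma> permutes {0..<2*n}}"
  let ?Pn = "{p. p permutes {0..<n}}"
  let ?PiE = "PiE {..<n} (\<lambda>_. {..<n})"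
  let ?F = "{f. (\<forall>i\<in>{0..<n}. f i \<in> {0..<n}) \<and> (\<forall>i. i \<notin> {0..<n} \<longrightarrow> f i = i)}"
  define gf where "gf f k = (if k < n then f k else f (k - n) + n)" for f :: "nat \<Rightarrow> nat" and k
  define H where "H f = det (mat (2*n) (2*n) (\<lambda>(i,j). A $$ (i, gf f j)))" for f
  have 1: "(\<Prod>i<n. \<Sum>c<n. A $$ (\<sigma> i, c) * A $$ (\<sigma> (i+n), c+n))
      = (\<Sum>f\<in>?PiE. \<Prod>k\<in>{0..<2*n}. A $$ (\<sigma> k, gf f k))" for \<sigma>
  proof -
    have "(\<Prod>i<n. \<Sum>c<n. A $$ (\<sigma> i, c) * A $$ (\<sigma> (i+n), c+n))
       = (\<Sum>f\<in>?PiE. \<Prod>i<n. A $$ (\<sigma> i, f i) * A $$ (\<sigma> (i+n), f i + n))"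
      by (rule prod_sum_PiE) auto
    also have "\<dots> = (\<Sum>f\<in>?PiE. \<Prod>k\<in>{0..<2*n}. A $$ (\<sigma> k, gf f k))"
      by (intro sum.cong refl) (simp add: prod_split2n prod.distrib gf_def)
    finally show ?thesis .
  qed
  have 2: "(\<Sum>\<sigma>\<in>?Pm. signof \<sigma> * (\<Prod>i<n. \<Sum>c<n. A $$ (\<sigma> i, c) * A $$ (\<sigma> (i+n), c+n)))
      = (\<Sum>f\<in>?PiE. H f)"
  proof -
    have "(\<Sum>\<sigma>\<in>?Pm. signof \<sigma> * (\<Prod>i<n. \<Sum>c<n. A $$ (\<sigma> i, c) * A $$ (\<sigma> (i+n), c+n)))
      = (\<Sum>\<sigma>\<in>?Pm. \<Sum>f\<in>?PiE. signof \<sigma> * (\<Prod>k\<in>{0..<2*n}. A $$ (\<sigma> k, gf f k)))"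
      unfolding 1 by (simp add: sum_distrib_left)
    also have "\<dots> = (\<Sum>f\<in>?PiE. \<Sum>\<sigma>\<in>?Pm. signof \<sigma> * (\<Prod>k\<in>{0..<2*n}. A $$ (\<sigma> k, gf f k)))"
      by (rule sum.swap)
    also have "\<dots> = (\<Sum>f\<in>?PiE. H f)"
      unfolding H_def by (intro sum.cong refl D_det A)
    finally show ?thesis .
  qed
  have Hcong: "H f = H f'" if "\<And>k. k < n \<Longrightarrow> f k = f' k" for f f'
  proof -
    have "mat (2*n) (2*n) (\<lambda>(i,j). A $$ (i, gf f j)) = mat (2*n) (2*n) (\<lambda>(i,j). A $$ (i, gf f' j))"
      by (intro eq_matI) (auto simp: gf_def that)
    then show ?thesis unfolding H_def by simp
  qed
  have 3: "(\<Sum>f\<in>?PiE. H f) = (\<Sum>f\<in>?F. H f)"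
  proof (rule sum.reindex_bij_witness[where i = "\<lambda>f. restrict f {..<n}" and j = "\<lambda>f k. if k < n then f k else k"])
    fix a assume a: "a \<in> ?PiE"
    show "restrict (\<lambda>k. if k < n then a k else k) {..<n} = a"
    proof
      fix k show "restrict (\<lambda>k. if k < n then a k else k) {..<n} k = a k"
        by (cases "k < n") (simp_all add: PiE_arb[OF a])
    qed
    have "a k < n" if "k < n" for k using PiE_mem[OF a, of k] that by simp
    then show "(\<lambda>k. if k < n then a k else k) \<in> ?F" by simp
    show "H (\<lambda>k. if k < n then a k else k) = H a" by (rule Hcong) simp
  next
    fix b assume b: "b \<in> ?F"
    show "(\<lambda>k. if k < n then restrict b {..<n} k else k) = b"
    proof
      fix k show "(if k < n then restrict b {..<n} k else k) = b k"
        by (cases "k < n") (use b in simp_all)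
    qed
    show "restrict b {..<n} \<in> ?PiE" using b by (simp add: restrict_PiE_iff)
  qed
  have finF: "finite ?F" by (rule finite_bounded_functions) auto
  have PnF: "?Pn \<subseteq> ?F"
  proof
    fix p assume "p \<in> ?Pn"
    then have p: "p permutes {0..<n}" by simp
    then show "p \<in> ?F" using permutes_in_image[OF p] unfolding permutes_def by auto
  qed
  have 4: "H f = 0" if f: "f \<in> ?F - ?Pn" for f
  proof -
    have "\<not> inj_on f {0..<n}"
    proof
      assume "inj_on f {0..<n}"
      then have "f permutes {0..<n}" by (rule inj_on_nat_permutes) (use f in auto)
      then show False using f by simp
    qed
    then obtain i j where ij: "i \<in> {0..<n}" "j \<in> {0..<n}" "i \<noteq> j" "f i = f j"
      unfolding inj_on_def by blast
    show ?thesis unfolding H_def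
      by (rule det_cols_noninj[of i j]) (use ij in \<open>auto simp: gf_def\<close>)
  qed
  have 5: "H p = det A" if p: "p \<in> ?Pn" for p
  proof -
    have pp: "p permutes {0..<n}" using p by simp
    have "mat (2*n) (2*n) (\<lambda>(i,j). A $$ (i, gf p j)) = mat (2*n) (2*n) (\<lambda>(i,j). A $$ (i, dbl n p j))"
      by (intro eq_matI) (auto simp: gf_def dbl_def)
    then have "H p = det (mat (2*n) (2*n) (\<lambda>(i,j). A $$ (i, dbl n p j)))" unfolding H_def by simp
    also have "\<dots> = signof (dbl n p) * det A" by (rule det_cols_perm[OF A dbl_props(1)[OF pp]])
    also have "\<dots> = det A" using dbl_props(2)[OF pp] by simp
    finally show ?thesis .
  qed
  have "(\<Sum>f\<in>?F. H f) = (\<Sum>f\<in>?F - ?Pn. H f) + (\<Sum>f\<in>?Pn. H f)"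
    by (rule sum.subset_diff[OF PnF finF])
  also have "(\<Sum>f\<in>?F - ?Pn. H f) = 0" using 4 by simp
  also have "(\<Sum>f\<in>?Pn. H f) = (\<Sum>f\<in>?Pn. det A)" using 5 by simp
  also have "\<dots> = of_nat (fact n) * det A"
    using card_permutations[of "{0..<n}" n] by simp
  finally show ?thesis using 2 3 by simp
qed

lemma T_formula:
  assumes A: "A \<in> carrier_mat (2*n) (2*n)"
  defines "x \<equiv> \<lambda>a b. (\<Sum>c<n. A $$ (a, c) * A $$ (b, c+n))"
  shows "(\<Sum>\<sigma>\<in>{\<sigma>. \<sigma> permutes {0..<2*n}}. signof \<sigma> *
      (\<Prod>i<n. x (\<sigma> i) (\<sigma> (i+n)) - x (\<sigma> (i+n)) (\<sigma> i)))
    = 2 ^ n * of_nat (fact n) * det A"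
proof -
  have "(\<Sum>\<sigma>\<in>{\<sigma>. \<sigma> permutes {0..<2*n}}. signof \<sigma> * (\<Prod>i<n. x (\<sigma> i) (\<sigma> (i+n))))
     = of_nat (fact n) * det A"
    unfolding x_def by (rule step2[OF A])
  then show ?thesis by (simp only: pairs_expand mult.assoc)
qed



lemma det2:
  assumes A: "(A :: 'b::comm_ring_1 mat) \<in> carrier_mat 2 2"
  shows "det A = A $$ (0,0) * A $$ (1,1) - A $$ (1,0) * A $$ (0,1)"
proof -
  have "det A = (\<Sum>i<2. A $$ (i,0) * cofactor A i 0)"
    by (rule laplace_expansion_column[OF A]) simp
  also have "\<dots> = A $$ (0,0) * cofactor A 0 0 + A $$ (1,0) * cofactor A 1 0"
    by (simp add: numeral_2_eq_2)
  also have "cofactor A 0 0 = A $$ (1,1)"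
    unfolding cofactor_def using A
    by (subst det_single) (auto simp: mat_delete_def)
  also have "cofactor A 1 0 = - A $$ (0,1)"
    unfolding cofactor_def using A
    by (subst det_single) (auto simp: mat_delete_def)
  finally show ?thesis by simp
qed

lemma jac_carrier: "jac n \<psi> \<in> carrier_mat (2*n) (2*n)"
  unfolding jac_def by simp

lemma jac_id: "jac n (\<lambda>x. x) = (1\<^sub>m (2*n) :: ('a::comm_ring_1) mpoly mat)"
  unfolding jac_def by (intro eq_matI) (auto simp: pd_Var)

lemma jac_T:
  fixes \<psi> :: "('a::comm_ring_1) mpoly \<Rightarrow> 'a mpoly"
  shows "(\<Sum>\<sigma>\<in>{\<sigma>. \<sigma> permutes {0..<2*n}}. signof \<sigma> *
      (\<Prod>i<n. bracket n (\<psi> (Var (\<sigma> i))) (\<psi> (Var (\<sigma> (i+n))))))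
    = 2 ^ n * of_nat (fact n) * det (jac n \<psi>)"
proof -
  let ?A = "jac n \<psi>"
  define x where "x = (\<lambda>a b. (\<Sum>c<n. ?A $$ (a, c) * ?A $$ (b, c+n)))"
  have xb: "x a b - x b a = bracket n (\<psi> (Var a)) (\<psi> (Var b))" if "a < 2*n" "b < 2*n" for a b
    unfolding x_def bracket_def jac_def using that by (simp add: sum_subtractf mult.commute)
  have "(\<Sum>\<sigma>\<in>{\<sigma>. \<sigma> permutes {0..<2*n}}. signof \<sigma> *
      (\<Prod>i<n. bracket n (\<psi> (Var (\<sigma> i))) (\<psi> (Var (\<sigma> (i+n))))))
    = (\<Sum>\<sigma>\<in>{\<sigma>. \<sigma> permutes {0..<2*n}}. signof \<sigma> *
      (\<Prod>i<n. x (\<sigma> i) (\<sigma> (i+n)) - x (\<sigma> (i+n)) (\<sigma> i)))"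
  proof (intro sum.cong refl arg_cong2[where f = "(*)"] prod.cong)
    fix \<sigma> i assume \<sigma>: "\<sigma> \<in> {\<sigma>. \<sigma> permutes {0..<2*n}}" and i: "i \<in> {..<n}"
    have "\<sigma> i < 2*n" "\<sigma> (i+n) < 2*n" using permutes_in_image[of \<sigma> "{0..<2*n}"] \<sigma> i by auto
    then show "bracket n (\<psi> (Var (\<sigma> i))) (\<psi> (Var (\<sigma> (i+n)))) = x (\<sigma> i) (\<sigma> (i+n)) - x (\<sigma> (i+n)) (\<sigma> i)"
      by (simp add: xb)
  qed
  also have "\<dots> = 2 ^ n * of_nat (fact n) * det ?A"
    unfolding x_def by (rule T_formula[OF jac_carrier])
  finally show ?thesis .
qed

lemma det_main:
  fixes \<phi> :: "('a::comm_ring_1) mpoly \<Rightarrow> 'a mpoly"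
  assumes br: "\<forall>p<2*n. \<forall>q<2*n. bracket n (\<phi> (Var p)) (\<phi> (Var q)) = bracket n (Var p) (Var q)"
  shows "2 ^ n * of_nat (fact n) * det (jac n \<phi>) = 2 ^ n * of_nat (fact n)"
proof -
  have "2 ^ n * of_nat (fact n) * det (jac n \<phi>) =
     (\<Sum>\<sigma>\<in>{\<sigma>. \<sigma> permutes {0..<2*n}}. signof \<sigma> *
      (\<Prod>i<n. bracket n (\<phi> (Var (\<sigma> i))) (\<phi> (Var (\<sigma> (i+n))))))"
    by (rule jac_T[symmetric])
  also have "\<dots> = (\<Sum>\<sigma>\<in>{\<sigma>. \<sigma> permutes {0..<2*n}}. signof \<sigma> *
      (\<Prod>i<n. bracket n ((\<lambda>x. x) (Var (\<sigma> i))) ((\<lambda>x. x) (Var (\<sigma> (i+n))))))"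
  proof (intro sum.cong refl arg_cong2[where f = "(*)"] prod.cong)
    fix \<sigma> i assume \<sigma>: "\<sigma> \<in> {\<sigma>. \<sigma> permutes {0..<2*n}}" and i: "i \<in> {..<n}"
    have "\<sigma> i < 2*n" "\<sigma> (i+n) < 2*n" using permutes_in_image[of \<sigma> "{0..<2*n}"] \<sigma> i by auto
    then show "bracket n (\<phi> (Var (\<sigma> i))) (\<phi> (Var (\<sigma> (i+n)))) =
       bracket n ((\<lambda>x. x) (Var (\<sigma> i))) ((\<lambda>x. x) (Var (\<sigma> (i+n))))"
      using br by simp
  qed
  also have "\<dots> = 2 ^ n * of_nat (fact n) * det (jac n (\<lambda>x. x))"
    by (rule jac_T)
  also have "\<dots> = 2 ^ n * of_nat (fact n)" by (simp add: jac_id)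
  finally show ?thesis .
qed

lemma inv_exists:
  fixes U :: "'b::comm_ring_1"
  assumes U: "of_nat (fact n) * U = 1" and n: "2 \<le> n"
  shows "\<exists>w::'b. 2 ^ n * of_nat (fact n) * w = 1"
proof -
  have "(2::nat) dvd (fact n :: nat)" using n by (intro dvd_fact) auto
  then obtain k :: nat where k: "(fact n :: nat) = 2 * k" by (auto elim: dvdE)
  define h where "h = of_nat k * U"
  have "(of_nat (fact n) :: 'b) = 2 * of_nat k" by (simp add: k)
  then have h: "2 * h = 1" using U unfolding h_def by (simp add: mult.assoc)
  have "2 ^ n * of_nat (fact n) * (h ^ n * U) = (2 * h) ^ n * (of_nat (fact n) * U)"
    by (simp add: power_mult_distrib algebra_simps)
  also have "\<dots> = 1" using h U by simp
  finally show ?thesis by blast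
qed

lemma det_n1:
  fixes \<phi> :: "('a::comm_ring_1) mpoly \<Rightarrow> 'a mpoly"
  assumes br: "\<forall>p<2*1. \<forall>q<2*1. bracket 1 (\<phi> (Var p)) (\<phi> (Var q)) = bracket 1 (Var p) (Var q)"
  shows "det (jac 1 \<phi>) = 1"
proof -
  have c: "jac 1 \<phi> \<in> carrier_mat 2 2" using jac_carrier[of 1 \<phi>] by simp
  have "det (jac 1 \<phi>) = bracket 1 (\<phi> (Var 0)) (\<phi> (Var 1))"
    unfolding det2[OF c] unfolding jac_def bracket_def by (simp add: mult.commute)
  also have "\<dots> = bracket 1 (Var 0) (Var 1)" using br by simp
  also have "\<dots> = 1" unfolding bracket_def by (simp add: pd_Var)
  finally show ?thesis .
qed

lemma det_final:
  fixes \<phi> :: "('a::comm_ring_1) mpoly \<Rightarrow> 'a mpoly"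
  assumes br: "\<forall>p<2*n. \<forall>q<2*n. bracket n (\<phi> (Var p)) (\<phi> (Var q)) = bracket n (Var p) (Var q)"
    and n: "n \<ge> 1" and u: "\<exists>u::'a. of_nat (fact n) * u = 1"
  shows "det (jac n \<phi>) = 1"
proof (cases "n = 1")
  case True
  then show ?thesis using det_n1 br by simp
next
  case False
  then have n2: "2 \<le> n" using n by simp
  obtain u :: 'a where u: "of_nat (fact n) * u = 1" using u by blast
  have "of_nat (fact n) * Const u = (1 :: 'a mpoly)"
  proof -
    have "(of_nat (fact n) :: 'a mpoly) = Const (of_nat (fact n))"
      unfolding Const_def by simp
    then show ?thesis by (simp add: Const_mult u Const_one)
  qed
  then obtain w :: "'a mpoly" where w: "2 ^ n * of_nat (fact n) * w = 1"
    using inv_exists[OF _ n2] by blast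
  have e: "2 ^ n * of_nat (fact n) * det (jac n \<phi>) = 2 ^ n * of_nat (fact n)"
    by (rule det_main[OF br])
  have "det (jac n \<phi>) = (2 ^ n * of_nat (fact n) * w) * det (jac n \<phi>)" using w by simp
  also have "\<dots> = w * (2 ^ n * of_nat (fact n) * det (jac n \<phi>))" by (simp add: ac_simps)
  also have "\<dots> = w * (2 ^ n * of_nat (fact n))" by (simp only: e)
  also have "\<dots> = 1" using w by (simp add: ac_simps)
  finally show ?thesis .
qed

theorem theorem1:
  fixes \<phi> :: "('a::comm_ring_1) mpoly \<Rightarrow> 'a mpoly" and n :: nat
  assumes "n \<ge> 1"
    and "alg_endo n \<phi>"
  shows "(symplectic n \<phi> \<longleftrightarrow> poisson_endo n \<phi>) \<and>
         ((symplectic n \<phi> \<or> poisson_endo n \<phi>) \<and> (\<exists>u::'a. of_nat (fact n) * u = 1)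
            \<longrightarrow> det (jac n \<phi>) = 1)"
proof -
  have p1: "symplectic n \<phi> \<longleftrightarrow> poisson_endo n \<phi>" by (rule part1[OF assms(2)])
  have br: "\<forall>p<2*n. \<forall>q<2*n. bracket n (\<phi> (Var p)) (\<phi> (Var q)) = bracket n (Var p) (Var q)"
    if "symplectic n \<phi>"
    using sym_BR_expl[OF assms(2) that] .
  show ?thesis using p1 br det_final[OF _ assms(1)] by blast
qed


end
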